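(* For each $u\in(0,1)$, $Q(u)=G(u)$ if and only if $S(u)=G(u)$.
   Context: Let $\mu,\nu$ be probability measures on $\mathbb R$ with finite first moments and $\mu\le_{cx}\nu$. Put $P_\eta(k)=\int(k-x)^+\eta(dx)$, $D=P_\nu-P_\mu$, and assume $\{k:D(k)>0\}$ is an interval. Let $G$ be any quantile function of $\mu$. For $u\in(0,1)$ let $\mu_u(A)=\mu(A\cap(-\infty,G(u)))+\big(u-\mu((-\infty,G(u)))\big)\delta_{G(u)}(A)$ and $\mathcal E_u=P_\nu-P_{\mu_u}$. $f^c$ is the largest convex minorant of $f$; $X^f(y)=\sup\{x\le y: f^c(x)=f(x)\}$, $Z^f(y)=\inf\{z\ge y: f^c(z)=f(z)\}$. Define $Q(u)=X^{\mathcal E_u}(G(u))$ and $S(u)=Z^{\mathcal E_u}(G(u))$. *)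

theory Defs
  imports "HOL-Probability.Probability"
begin

text \<open>Integral of a convex function w.r.t. a measure with finite first moment, in the
  extended sense: positive part (possibly infinite) minus negative part (finite).\<close>
definition ext_integral :: "real measure \<Rightarrow> (real \<Rightarrow> real) \<Rightarrow> ereal" where
  "ext_integral M \<phi> =
     enn2ereal (\<integral>\<^sup>+ x. ennreal (\<phi> x) \<partial>M) - ereal (\<integral> x. max 0 (- \<phi> x) \<partial>M)"

definition convex_order :: "real measure \<Rightarrow> real measure \<Rightarrow> bool" where
  "convex_order \<mu> \<nu> \<longleftrightarrow>
     (\<forall>\<phi>::real \<Rightarrow> real. convex_on UNIV \<phi> \<longrightarrow> ext_integral \<mu> \<phi> \<le> ext_integral \<nu> \<phi>)"

definition put_price :: "real measure \<Rightarrow> real \<Rightarrow> real" where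
  "put_price \<eta> k = (\<integral> x. max 0 (k - x) \<partial>\<eta>)"

definition quantile_function :: "real measure \<Rightarrow> (real \<Rightarrow> real) \<Rightarrow> bool" where
  "quantile_function \<mu> G \<longleftrightarrow>
     (\<forall>u \<in> {0<..<1}. measure \<mu> {..<G u} \<le> u \<and> u \<le> measure \<mu> {..G u})"

definition mu_u :: "real measure \<Rightarrow> (real \<Rightarrow> real) \<Rightarrow> real \<Rightarrow> real measure" where
  "mu_u \<mu> G u = measure_of UNIV (sets borel)
     (\<lambda>A. emeasure \<mu> (A \<inter> {..<G u}) + ennreal (u - measure \<mu> {..<G u}) * indicator A (G u))"

definition convex_minorant :: "(real \<Rightarrow> real) \<Rightarrow> real \<Rightarrow> real" where
  "convex_minorant f x = Sup {g x | g. convex_on UNIV g \<and> (\<forall>y. g y \<le> f y)}"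

text \<open>X^f and Z^f, valued in the extended reals (sup of empty set = -infinity,
  inf of empty set = +infinity).\<close>
definition X_f :: "(real \<Rightarrow> real) \<Rightarrow> real \<Rightarrow> ereal" where
  "X_f f y = Sup (ereal ` {x. x \<le> y \<and> convex_minorant f x = f x})"

definition Z_f :: "(real \<Rightarrow> real) \<Rightarrow> real \<Rightarrow> ereal" where
  "Z_f f y = Inf (ereal ` {z. y \<le> z \<and> convex_minorant f z = f z})"

end

theory Submission
  imports Defs
begin


lemma cm_cont: "continuous_on UNIV (convex_minorant f)"
proof (cases "\<exists>g. convex_on UNIV g \<and> (\<forall>y. g y \<le> f y)")
  case False
  then have "\<And>x. {g x | g. convex_on UNIV g \<and> (\<forall>y. g y \<le> f y)} = {}" by blast
  then have "\<And>x. convex_minorant f x = Sup {}" unfolding convex_minorant_def by (simp only:)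
  then show ?thesis by (simp add: continuous_on_const)
next
  case True
  then obtain g0 where g0: "convex_on UNIV g0" "\<forall>y. g0 y \<le> f y" by blast
  let ?S = "\<lambda>x. {g x | g. convex_on UNIV g \<and> (\<forall>y. g y \<le> f y)}"
  have ne: "?S x \<noteq> {}" for x using g0 by blast
  have bdd: "bdd_above (?S x)" for x by (auto intro!: bdd_aboveI[of _ "f x"])
  have "convex_on UNIV (convex_minorant f)"
  proof (rule convex_onI)
    fix t x y :: real assume t: "0 < t" "t < 1"
    show "convex_minorant f ((1 - t) *\<^sub>R x + t *\<^sub>R y) \<le> (1 - t) * convex_minorant f x + t * convex_minorant f y"
      unfolding convex_minorant_def
    proof (rule cSup_least[OF ne])
      fix z assume "z \<in> ?S ((1 - t) *\<^sub>R x + t *\<^sub>R y)"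
      then obtain g where g: "convex_on UNIV g" "\<forall>y. g y \<le> f y" and z: "z = g ((1 - t) *\<^sub>R x + t *\<^sub>R y)" by blast
      have "z \<le> (1 - t) * g x + t * g y" using convex_onD[OF g(1), of t x y] t z by simp
      also have "\<dots> \<le> (1 - t) * Sup (?S x) + t * Sup (?S y)"
        apply (intro add_mono mult_left_mono cSup_upper bdd)
        using g t by auto
      finally show "z \<le> (1 - t) * Sup (?S x) + t * Sup (?S y)" .
    qed
  qed simp
  then show ?thesis using convex_on_continuous[of UNIV] by simp
qed

lemma X_char:
  assumes "closed T"
  shows "Sup (ereal ` {x. x \<le> y \<and> x \<in> T}) = ereal y \<longleftrightarrow> y \<in> T"
proof
  assume "y \<in> T"
  then show "Sup (ereal ` {x. x \<le> y \<and> x \<in> T}) = ereal y"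
    by (intro Sup_eqI) auto
next
  assume h: "Sup (ereal ` {x. x \<le> y \<and> x \<in> T}) = ereal y"
  show "y \<in> T"
  proof (rule ccontr)
    assume "y \<notin> T"
    then obtain e where e: "e > 0" "ball y e \<subseteq> - T"
      using assms open_contains_ball[of "-T"] by (auto simp: closed_def)
    have "Sup (ereal ` {x. x \<le> y \<and> x \<in> T}) \<le> ereal (y - e)"
    proof (rule Sup_least)
      fix z assume "z \<in> ereal ` {x. x \<le> y \<and> x \<in> T}"
      then obtain x where x: "z = ereal x" "x \<le> y" "x \<in> T" by auto
      have "x \<notin> ball y e" using e x by auto
      then show "z \<le> ereal (y - e)" using x by (auto simp: dist_real_def)
    qed
    then show False using h e by simp
  qed
qed

lemma Z_char:
  assumes "closed T"
  shows "Inf (ereal ` {x. y \<le> x \<and> x \<in> T}) = ereal y \<longleftrightarrow> y \<in> T"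
proof
  assume "y \<in> T"
  then show "Inf (ereal ` {x. y \<le> x \<and> x \<in> T}) = ereal y"
    by (intro Inf_eqI) auto
next
  assume h: "Inf (ereal ` {x. y \<le> x \<and> x \<in> T}) = ereal y"
  show "y \<in> T"
  proof (rule ccontr)
    assume "y \<notin> T"
    then obtain e where e: "e > 0" "ball y e \<subseteq> - T"
      using assms open_contains_ball[of "-T"] by (auto simp: closed_def)
    have "ereal (y + e) \<le> Inf (ereal ` {x. y \<le> x \<and> x \<in> T})"
    proof (rule Inf_greatest)
      fix z assume "z \<in> ereal ` {x. y \<le> x \<and> x \<in> T}"
      then obtain x where x: "z = ereal x" "y \<le> x" "x \<in> T" by auto
      have "x \<notin> ball y e" using e x by auto
      then show "ereal (y + e) \<le> z" using x by (auto simp: dist_real_def)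
    qed
    then show False using h e by simp
  qed
qed

lemma XZ_equiv:
  assumes "continuous_on UNIV f"
  shows "X_f f y = ereal y \<longleftrightarrow> Z_f f y = ereal y"
proof -
  let ?T = "{x. convex_minorant f x = f x}"
  have c: "closed ?T" by (rule closed_Collect_eq[OF cm_cont assms])
  have "X_f f y = Sup (ereal ` {x. x \<le> y \<and> x \<in> ?T})" unfolding X_f_def by simp
  moreover have "Z_f f y = Inf (ereal ` {x. y \<le> x \<and> x \<in> ?T})" unfolding Z_f_def by simp
  ultimately show ?thesis using X_char[OF c] Z_char[OF c] by simp
qed



lemma sum_measure_nn:
  assumes sN: "sets N = sets M1" and s2: "sets M2 = sets M1"
  and em: "\<And>A. A \<in> sets M1 \<Longrightarrow> emeasure N A = emeasure M1 A + emeasure M2 A"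
  and f: "f \<in> borel_measurable M1"
  shows "nn_integral N f = nn_integral M1 f + nn_integral M2 f"
  using f
proof (induct rule: borel_measurable_induct)
  case (cong f g)
  have spN: "space N = space M1" and sp2: "space M2 = space M1"
    using sets_eq_imp_space_eq[OF sN] sets_eq_imp_space_eq[OF s2] by auto
  have "nn_integral N f = nn_integral N g" by (rule nn_integral_cong) (simp add: cong spN)
  moreover have "nn_integral M1 f = nn_integral M1 g" by (rule nn_integral_cong) (simp add: cong)
  moreover have "nn_integral M2 f = nn_integral M2 g" by (rule nn_integral_cong) (simp add: cong sp2)
  ultimately show ?case using cong by simp
next
  case (set A)
  then show ?case using em[OF set] sN s2 by simp
next
  case (mult u c)
  have uN: "u \<in> borel_measurable N" and u2: "u \<in> borel_measurable M2"
    by (subst measurable_cong_sets[OF sN refl], rule mult(2))+ (subst measurable_cong_sets[OF s2 refl], rule mult(2))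
  show ?case using mult uN u2 by (simp add: nn_integral_cmult distrib_left)
next
  case (add u v)
  have uN: "u \<in> borel_measurable N" and u2: "u \<in> borel_measurable M2"
    by (subst measurable_cong_sets[OF sN refl], rule add(1))+ (subst measurable_cong_sets[OF s2 refl], rule add(1))
  have vN: "v \<in> borel_measurable N" and v2: "v \<in> borel_measurable M2"
    by (subst measurable_cong_sets[OF sN refl], rule add(4))+ (subst measurable_cong_sets[OF s2 refl], rule add(4))
  show ?case using add uN u2 vN v2 by (simp add: nn_integral_add ac_simps)
next
  case (seq U)
  note mc = measurable_cong_sets[OF sN refl] measurable_cong_sets[OF s2 refl]
  have UN: "U i \<in> borel_measurable N" and U2: "U i \<in> borel_measurable M2" for i
    by (subst measurable_cong_sets[OF sN refl], rule seq(1))+ (subst measurable_cong_sets[OF s2 refl], rule seq(1))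
  have eq: "(SUP i. U i) = (\<lambda>x. SUP i. U i x)" by (simp add: SUP_apply[abs_def])
  have i1: "incseq (\<lambda>i. nn_integral M1 (U i))"
    using seq(4) by (auto simp: incseq_def le_fun_def intro!: nn_integral_mono)
  have i2: "incseq (\<lambda>i. nn_integral M2 (U i))"
    using seq(4) by (auto simp: incseq_def le_fun_def intro!: nn_integral_mono)
  have "nn_integral N (SUP i. U i) = (SUP i. nn_integral N (U i))"
    unfolding eq by (rule nn_integral_monotone_convergence_SUP[OF seq(4) UN])
  also have "\<dots> = (SUP i. nn_integral M1 (U i) + nn_integral M2 (U i))" using seq(3) by simp
  also have "\<dots> = (SUP i. nn_integral M1 (U i)) + (SUP i. nn_integral M2 (U i))"
    by (rule ennreal_SUP_add[OF i1 i2])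
  also have "\<dots> = nn_integral M1 (SUP i. U i) + nn_integral M2 (SUP i. U i)"
    unfolding eq using nn_integral_monotone_convergence_SUP[OF seq(4) seq(1)]
      nn_integral_monotone_convergence_SUP[OF seq(4) U2] by simp
  finally show ?case .
qed

lemma lip_cont:
  fixes h :: "real \<Rightarrow> real \<Rightarrow> real"
  assumes N: "finite_measure N" and int: "\<And>k. integrable N (h k)"
    and L: "\<And>k k' x. \<bar>h k x - h k' x\<bar> \<le> \<bar>k - k'\<bar>"
  shows "continuous_on UNIV (\<lambda>k. integral\<^sup>L N (h k))"
proof (rule lipschitz_on_continuous_on, rule lipschitz_onI)
  fix k k' :: real
  have "\<bar>integral\<^sup>L N (h k) - integral\<^sup>L N (h k')\<bar> = \<bar>integral\<^sup>L N (\<lambda>x. h k x - h k' x)\<bar>"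
    using int by simp
  also have "\<dots> \<le> integral\<^sup>L N (\<lambda>x. \<bar>h k x - h k' x\<bar>)"
    using integral_norm_bound[of N "\<lambda>x. h k x - h k' x"] by simp
  also have "\<dots> \<le> integral\<^sup>L N (\<lambda>x. \<bar>k - k'\<bar>)"
    using int L finite_measure.integrable_const[OF N] by (intro integral_mono) auto
  also have "\<dots> = measure N (space N) * dist k k'" by (simp add: dist_real_def)
  finally show "dist (integral\<^sup>L N (h k)) (integral\<^sup>L N (h k')) \<le> measure N (space N) * dist k k'"
    by (simp add: dist_real_def)
qed simp



lemma put_int:
  assumes P: "prob_space \<mu>" and I: "integrable \<mu> (\<lambda>x. x)"
  shows "integrable \<mu> (\<lambda>x. max 0 (k - x::real))"
proof -
  interpret prob_space \<mu> by fact
  show ?thesis using I by (intro integrable_max integrable_diff) auto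
qed

lemma put_cont_basic:
  assumes P: "prob_space \<mu>" and I: "integrable \<mu> (\<lambda>x. x)" and S: "A \<in> sets \<mu>"
  shows "continuous_on UNIV (\<lambda>k. \<integral>x. max 0 (k - x::real) * indicator A x \<partial>\<mu>)"
proof (rule lip_cont)
  show "finite_measure \<mu>" using P by (simp add: prob_space_def)
  show "integrable \<mu> (\<lambda>x. max 0 (k - x) * indicator A x)" for k
    by (rule integrable_real_mult_indicator[OF S put_int[OF P I]])
  show "\<bar>max 0 (k - x) * indicator A x - max 0 (k' - x) * indicator A x\<bar> \<le> \<bar>k - k'\<bar>" for k k' x
    by (auto split: split_indicator)
qed

lemma mu_u_cont:
  assumes P: "prob_space \<mu>" and I: "integrable \<mu> (\<lambda>x. x)" and S: "sets \<mu> = sets borel"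
    and c0: "0 \<le> u - measure \<mu> {..<G u}"
  shows "continuous_on UNIV (put_price (mu_u \<mu> G u))"
proof -
  define g where "g = G u"
  define c where "c = u - measure \<mu> {..<G u}"
  define M1 where "M1 = density \<mu> (indicator {..<g})"
  define M2 where "M2 = density (return borel g) (\<lambda>_. ennreal c)"
  define M where "M = mu_u \<mu> G u"
  have sM1: "sets M1 = sets borel" unfolding M1_def using S by simp
  have sM2: "sets M2 = sets borel" unfolding M2_def by simp
  have mc: "measurable \<mu> X = measurable borel X" for X by (rule measurable_cong_sets[OF S refl])
  have e1: "emeasure M1 A = emeasure \<mu> (A \<inter> {..<g})" if A: "A \<in> sets borel" for A
  proof -
    have "emeasure M1 A = (\<integral>\<^sup>+ x. indicator {..<g} x * indicator A x \<partial>\<mu>)"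
      unfolding M1_def using A S by (subst emeasure_density) (auto simp: mc)
    also have "\<dots> = (\<integral>\<^sup>+ x. indicator (A \<inter> {..<g}) x \<partial>\<mu>)"
      by (intro nn_integral_cong) (auto split: split_indicator)
    also have "\<dots> = emeasure \<mu> (A \<inter> {..<g})" using A S by simp
    finally show ?thesis .
  qed
  have e2: "emeasure M2 A = ennreal c * indicator A g" if A: "A \<in> sets borel" for A
  proof -
    have "emeasure M2 A = (\<integral>\<^sup>+ x. ennreal c * indicator A x \<partial>return borel g)"
      unfolding M2_def using A by (subst emeasure_density) auto
    also have "\<dots> = ennreal c * indicator A g" using A by (subst nn_integral_return) auto
    finally show ?thesis .
  qed
  have ca: "countably_additive (sets borel) (\<lambda>A. emeasure M1 A + emeasure M2 A)"
    unfolding countably_additive_def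
  proof (intro allI impI)
    fix A :: "nat \<Rightarrow> real set" assume A: "range A \<subseteq> sets borel" "disjoint_family A"
    have "(\<Sum>i. emeasure M1 (A i) + emeasure M2 (A i)) = (\<Sum>i. emeasure M1 (A i)) + (\<Sum>i. emeasure M2 (A i))"
      by (rule suminf_add[symmetric]) auto
    also have "\<dots> = emeasure M1 (\<Union>i. A i) + emeasure M2 (\<Union>i. A i)"
      using A sM1 sM2 by (simp add: suminf_emeasure)
    finally show "(\<Sum>i. emeasure M1 (A i) + emeasure M2 (A i)) = emeasure M1 (\<Union>i. A i) + emeasure M2 (\<Union>i. A i)" .
  qed
  have sa: "sigma_algebra UNIV (sets (borel :: real measure))" using sets.sigma_algebra_axioms[of borel] by simp
  have Meq: "M = measure_of UNIV (sets borel) (\<lambda>A. emeasure M1 A + emeasure M2 A)"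
    unfolding M_def mu_u_def
  proof (rule measure_of_eq[OF _ ])
    show "sets borel \<subseteq> Pow UNIV" by simp
    fix A :: "real set" assume A: "A \<in> sigma_sets UNIV (sets borel)"
    then have A': "A \<in> sets borel" using sigma_algebra.sigma_sets_eq[OF sa] by simp
    show "emeasure \<mu> (A \<inter> {..<G u}) + ennreal (u - measure \<mu> {..<G u}) * indicator A (G u) = emeasure M1 A + emeasure M2 A"
      using e1[OF A'] e2[OF A'] by (simp add: g_def c_def)
  qed
  have sM: "sets M = sets borel" unfolding Meq using sigma_algebra.sets_measure_of_eq[OF sa] by simp
  have pos: "positive (sets borel) (\<lambda>A. emeasure M1 A + emeasure M2 A)"
    by (simp add: positive_def)
  have em: "emeasure M A = emeasure M1 A + emeasure M2 A" if "A \<in> sets borel" for A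
    unfolding Meq by (rule emeasure_measure_of_sigma[OF sa pos ca that])
  have nn: "nn_integral M f = (\<integral>\<^sup>+ x. indicator {..<g} x * f x \<partial>\<mu>) + ennreal c * f g"
    if f: "f \<in> borel_measurable borel" for f
  proof -
    have "nn_integral M f = nn_integral M1 f + nn_integral M2 f"
      by (rule sum_measure_nn) (use sM sM1 sM2 em f in auto)
    moreover have "nn_integral M1 f = (\<integral>\<^sup>+ x. indicator {..<g} x * f x \<partial>\<mu>)"
      unfolding M1_def using f S by (subst nn_integral_density) (auto simp: mc)
    moreover have "nn_integral M2 f = ennreal c * f g"
      unfolding M2_def using f by (subst nn_integral_density) (auto simp: nn_integral_return)
    ultimately show ?thesis by simp
  qed
  have pp: "put_price M k = (\<integral>x. max 0 (k - x) * indicator {..<g} x \<partial>\<mu>) + c * max 0 (k - g)" for k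
  proof -
    have hi: "integrable \<mu> (\<lambda>x. max 0 (k - x) * indicator {..<g} x)"
      by (rule integrable_real_mult_indicator[OF _ put_int[OF P I]]) (simp add: S)
    have "put_price M k = enn2real (\<integral>\<^sup>+ x. ennreal (max 0 (k - x)) \<partial>M)"
      unfolding put_price_def by (rule integral_eq_nn_integral) (auto simp: measurable_cong_sets[OF sM refl])
    also have "(\<integral>\<^sup>+ x. ennreal (max 0 (k - x)) \<partial>M) = (\<integral>\<^sup>+ x. indicator {..<g} x * ennreal (max 0 (k - x)) \<partial>\<mu>) + ennreal c * ennreal (max 0 (k - g))"
      by (rule nn) simp
    also have "(\<integral>\<^sup>+ x. indicator {..<g} x * ennreal (max 0 (k - x)) \<partial>\<mu>) = (\<integral>\<^sup>+ x. ennreal (max 0 (k - x) * indicator {..<g} x) \<partial>\<mu>)"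
      by (intro nn_integral_cong) (auto split: split_indicator)
    also have "\<dots> = ennreal (\<integral>x. max 0 (k - x) * indicator {..<g} x \<partial>\<mu>)"
      by (rule nn_integral_eq_integral[OF hi]) auto
    also have "ennreal c * ennreal (max 0 (k - g)) = ennreal (c * max 0 (k - g))"
      using c0 c_def by (simp add: ennreal_mult)
    also have "ennreal (\<integral>x. max 0 (k - x) * indicator {..<g} x \<partial>\<mu>) + ennreal (c * max 0 (k - g))
       = ennreal ((\<integral>x. max 0 (k - x) * indicator {..<g} x \<partial>\<mu>) + c * max 0 (k - g))"
      using c0 c_def by (intro ennreal_plus[symmetric] integral_nonneg_AE) auto
    finally have eq: "put_price M k = enn2real (ennreal ((\<integral>x. max 0 (k - x) * indicator {..<g} x \<partial>\<mu>) + c * max 0 (k - g)))" .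
    show ?thesis unfolding eq
      by (rule enn2real_ennreal) (use c0 c_def in \<open>auto intro!: add_nonneg_nonneg integral_nonneg_AE\<close>)
  qed
  have "continuous_on UNIV (\<lambda>k. (\<integral>x. max 0 (k - x) * indicator {..<g} x \<partial>\<mu>) + c * max 0 (k - g))"
    by (intro continuous_on_add put_cont_basic[OF P I] continuous_intros) (simp add: S)
  then show ?thesis using pp unfolding M_def by simp
qed


theorem lemma4p1:
  fixes \<mu> \<nu> :: "real measure" and G :: "real \<Rightarrow> real" and u :: real
  assumes "prob_space \<mu>" and "prob_space \<nu>"
    and "sets \<mu> = sets borel" and "sets \<nu> = sets borel"
    and "integrable \<mu> (\<lambda>x. x)" and "integrable \<nu> (\<lambda>x. x)"
    and "convex_order \<mu> \<nu>"
    and "is_interval {k. put_price \<nu> k - put_price \<mu> k > 0}"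
    and "quantile_function \<mu> G"
    and "u \<in> {0<..<1}"
  shows "X_f (\<lambda>k. put_price \<nu> k - put_price (mu_u \<mu> G u) k) (G u) = ereal (G u)
     \<longleftrightarrow> Z_f (\<lambda>k. put_price \<nu> k - put_price (mu_u \<mu> G u) k) (G u) = ereal (G u)"
proof (rule XZ_equiv)
  have c0: "0 \<le> u - measure \<mu> {..<G u}" using assms(9,10) unfolding quantile_function_def by auto
  have "continuous_on UNIV (put_price \<nu>)"
  proof -
    have "continuous_on UNIV (\<lambda>k. \<integral>x. max 0 (k - x::real) * indicator UNIV x \<partial>\<nu>)"
      by (rule put_cont_basic[OF assms(2) assms(6)]) (simp add: assms(4))
    then show ?thesis unfolding put_price_def by simp
  qed
  moreover have "continuous_on UNIV (put_price (mu_u \<mu> G u))"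
    by (rule mu_u_cont[where \<mu>=\<mu> and G=G and u=u, OF assms(1) assms(5) assms(3) c0])
  ultimately show "continuous_on UNIV (\<lambda>k. put_price \<nu> k - put_price (mu_u \<mu> G u) k)"
    by (intro continuous_on_diff) auto
qed

end
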